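(* Let $\mathcal{X}$ be a domain, $\mathcal{H}\subseteq\{\pm1\}^{\mathcal{X}}$ a class of experts, $T,N\in\mathbb{N}$, $\gamma>0$. Let $\mathcal{W}_1,\ldots,\mathcal{W}_N$ be $(\gamma,T)$-agnostic weak online learners for $\mathcal{H}$ with regret $R_{\mathcal{W}}(T)$, and let $\mathcal{A}$ be a $([-1,1],N)$-OCO algorithm with regret $R_{\mathcal{A}}(N)$. Run the following algorithm (Online Agnostic Boosting with OCO) on any sequence of examples $(x_1,y_1),\ldots,(x_T,y_T)\in\mathcal{X}\times\{\pm1\}$: for $t=1,\ldots,T$: (1) receive $x_t$ and predict $\hat y_t=\Pi\big(\frac{1}{\gamma N}\sum_{i=1}^N\mathcal{W}_i(x_t)\big)$; (2) for $i=1,\ldots,N$: set $p^1_t=0$ and, if $i>1$, $p^i_t=\mathcal{A}(\ell^1_t,\ldots,\ell^{i-1}_t)\in[-1,1]$ (the point played by a fresh run of $\mathcal{A}$ after observing losses $\ell^1_t,\ldots,\ell^{i-1}_t$); set the loss $\ell^i_t(p)=p\big(\frac1\gamma\mathcal{W}_i(x_t)y_t-1\big)$; pass $(x_t,y^i_t)$ to $\mathcal{W}_i$, where $y^i_t$ is a random label with $\Pr[y^i_t=y_t]=\frac{1+p^i_t}{2}$ and $y^i_t=-y_t$ otherwise. Then \[ \frac1T\,\mathbb{E}\Big[\max_{h^*\in\mathcal{H}}\sum_{t=1}^T h^*(x_t)y_t-\sum_{t=1}^T\hat y_t y_t\Big]\le\frac{R_{\mathcal{W}}(T)}{\gamma T}+\frac{R_{\mathcal{A}}(N)}{N},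 \] where the expectation is with respect to the randomness of the algorithm and of the weak learners.
   Context: Online learning protocol: in each round the learner observes $x_t$, outputs a prediction, then observes $y_t$; $\mathcal{W}(x_t)\in\{\pm1\}$ denotes the prediction of online learner $\mathcal{W}$ at round $t$ given its internal state (which is updated by the examples passed to it). Definition ($(\gamma,T)$-AWOL): an online learning algorithm $\mathcal{W}$ is a $(\gamma,T)$-agnostic weak online learner for $\mathcal{H}$ if for any sequence $(x_1,y_1),\ldots,(x_T,y_T)\in\mathcal{X}\times\{\pm1\}$ fed to it, it outputs $\mathcal{W}(x_t)\in\{\pm1\}$ with $\mathbb{E}[\sum_{t=1}^T\mathcal{W}(x_t)y_t]\ge\gamma\max_{h\in\mathcal{H}}\mathbb{E}[\sum_{t=1}^T h(x_t)y_t]-R_{\mathcal{W}}(T)$, expectation over the randomness of $\mathcal{W}$ and of the possibly adaptive adversary, where $R_{\mathcal{W}}:\mathbb{N}\to\mathbb{R}_+$ is non-decreasing and sublinear. Online convex optimization: a $(\mathcal{K},N)$-OCO algorithm, for a compact convex $\mathcal{K}\subset\mathbb{R}^d$, at each iteration $i=1,\ldots,N$ chooses $p^i\in\mathcal{K}$ based on previously revealed losses, after which an adversary reveals a bounded convex loss $\ell^i$ on $\mathcal{K}$; its regret $R_{\mathcal{A}}(N)$ is (an upper bound, valid for all such loss sequences, on) $\sum_{i=1}^N\ell^i(p^i)-\min_{p\in\mathcal{K}}\sum_{i=1}^N\ell^i(p)$. Randomized projection: for $z\in\mathbb{R}$, $\Pi(z)=\mathrm{sign}(z)$ if $|z|\ge1$;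 otherwise $\Pi(z)=+1$ with probability $\frac{1+z}{2}$ and $-1$ with probability $\frac{1-z}{2}$. *)

theory Defs
  imports "HOL-Probability.Probability"
begin

text \<open>An online learner with state space 's: a random initial state, a prediction
  that is determined by the current internal state, and a (randomized) update of the
  state after an example (x_t, y_t) is passed to it.\<close>
record ('s, 'x) learner =
  lr_init :: "'s pmf"
  lr_pred :: "'s \<Rightarrow> 'x \<Rightarrow> real"
  lr_upd  :: "'s \<Rightarrow> 'x \<Rightarrow> real \<Rightarrow> 's pmf"

text \<open>Transcript entries: (x_t, y_t, prediction of the learner at round t).\<close>
type_synonym 'x transcript = "('x \<times> real \<times> real) list"

type_synonym 'x adversary = "'x transcript \<Rightarrow> ('x \<times> real) pmf"

definition valid_adversary :: "'x adversary \<Rightarrow> bool" where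
  "valid_adversary adv \<longleftrightarrow> (\<forall>h. snd ` set_pmf (adv h) \<subseteq> {-1, 1})"

primrec interact :: "('s, 'x, 'z) learner_scheme \<Rightarrow> 'x adversary \<Rightarrow> nat \<Rightarrow> ('s \<times> 'x transcript) pmf" where
  "interact W adv 0 = map_pmf (\<lambda>s. (s, [])) (lr_init W)"
| "interact W adv (Suc n) =
     interact W adv n \<bind> (\<lambda>(s, h). adv h \<bind> (\<lambda>(x, y).
        map_pmf (\<lambda>s'. (s', h @ [(x, y, lr_pred W s x)])) (lr_upd W s x y)))"

definition sublinear :: "(nat \<Rightarrow> real) \<Rightarrow> bool" where
  "sublinear R \<longleftrightarrow> ((\<lambda>n. R n / real n) \<longlonglongrightarrow> 0)"

definition awol :: "('s, 'x, 'z) learner_scheme \<Rightarrow> real \<Rightarrow> nat \<Rightarrow> (nat \<Rightarrow> real) \<Rightarrow> ('x \<Rightarrow> real) set \<Rightarrow> bool" where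
  "awol W \<gamma> T R H \<longleftrightarrow>
     (\<forall>s x. lr_pred W s x \<in> {-1, 1}) \<and>
     (\<forall>n. 0 \<le> R n) \<and> mono R \<and> sublinear R \<and>
     (\<forall>adv. valid_adversary adv \<longrightarrow>
        measure_pmf.expectation (interact W adv T) (\<lambda>(s, h). \<Sum>(x, y, w)\<leftarrow>h. w * y)
        \<ge> \<gamma> * (SUP c\<in>H. measure_pmf.expectation (interact W adv T) (\<lambda>(s, h). \<Sum>(x, y, w)\<leftarrow>h. c x * y))
          - R T)"

text \<open>A deterministic OCO algorithm on K = [-1,1]: the point it plays after having seen
  the losses ls.\<close>
definition oco :: "((real \<Rightarrow> real) list \<Rightarrow> real) \<Rightarrow> nat \<Rightarrow> real \<Rightarrow> real \<Rightarrow> bool" where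
  "oco A N R B \<longleftrightarrow>
     (\<forall>ls. A ls \<in> {-1..1}) \<and>
     (\<forall>ls. length ls = N \<longrightarrow>
        (\<forall>l\<in>set ls. convex_on {-1..1} l \<and> (\<forall>p\<in>{-1..1}. \<bar>l p\<bar> \<le> B)) \<longrightarrow>
        (\<Sum>i<N. (ls ! i) (A (take i ls))) - (INF p\<in>{-1..1}. \<Sum>i<N. (ls ! i) p) \<le> R)"

definition proj_pmf :: "real \<Rightarrow> real pmf" where
  "proj_pmf z = (if \<bar>z\<bar> \<ge> 1 then return_pmf (sgn z)
                 else map_pmf (\<lambda>b. if b then 1 else -1) (bernoulli_pmf ((1 + z) / 2)))"

definition relabel_pmf :: "real \<Rightarrow> real \<Rightarrow> real pmf" where
  "relabel_pmf p y = map_pmf (\<lambda>b. if b then y else - y) (bernoulli_pmf ((1 + p) / 2))"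

definition boost_loss :: "real \<Rightarrow> real \<Rightarrow> real \<Rightarrow> real \<Rightarrow> real" where
  "boost_loss \<gamma> w y = (\<lambda>p. p * (w * y / \<gamma> - 1))"

text \<open>The point p^i_t (learners indexed 1..N; w i = W_i(x_t)).\<close>
definition boost_point :: "((real \<Rightarrow> real) list \<Rightarrow> real) \<Rightarrow> real \<Rightarrow> (nat \<Rightarrow> real) \<Rightarrow> real \<Rightarrow> nat \<Rightarrow> real" where
  "boost_point A \<gamma> w y i =
     (if i = 1 then 0 else A (map (\<lambda>j. boost_loss \<gamma> (w j) y) [1..<i]))"

definition boost_round ::
  "(nat \<Rightarrow> ('s, 'x, 'z) learner_scheme) \<Rightarrow> ((real \<Rightarrow> real) list \<Rightarrow> real) \<Rightarrow> real \<Rightarrow> nat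
    \<Rightarrow> 'x \<Rightarrow> real \<Rightarrow> (nat \<Rightarrow> 's) \<Rightarrow> ((nat \<Rightarrow> 's) \<times> real) pmf" where
  "boost_round W A \<gamma> N x y S =
     (let w = (\<lambda>i. lr_pred (W i) (S i) x) in
      pair_pmf
        (Pi_pmf {1..N} undefined
           (\<lambda>i. relabel_pmf (boost_point A \<gamma> w y i) y \<bind> (\<lambda>yi. lr_upd (W i) (S i) x yi)))
        (proj_pmf ((1 / (\<gamma> * real N)) * (\<Sum>i=1..N. w i))))"

text \<open>Running the algorithm on (x_1,y_1),...,(x_n,y_n): distribution of
  (learner states, \<Sum>_{t\<le>n} yhat_t * y_t).\<close>
primrec boost_run ::
  "(nat \<Rightarrow> ('s, 'x, 'z) learner_scheme) \<Rightarrow> ((real \<Rightarrow> real) list \<Rightarrow> real) \<Rightarrow> real \<Rightarrow> nat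
    \<Rightarrow> (nat \<Rightarrow> 'x) \<Rightarrow> (nat \<Rightarrow> real) \<Rightarrow> nat \<Rightarrow> ((nat \<Rightarrow> 's) \<times> real) pmf" where
  "boost_run W A \<gamma> N xs ys 0 =
     map_pmf (\<lambda>S. (S, 0)) (Pi_pmf {1..N} undefined (\<lambda>i. lr_init (W i)))"
| "boost_run W A \<gamma> N xs ys (Suc n) =
     boost_run W A \<gamma> N xs ys n \<bind> (\<lambda>(S, acc).
       map_pmf (\<lambda>(S', yhat). (S', acc + yhat * ys (Suc n)))
         (boost_round W A \<gamma> N (xs (Suc n)) (ys (Suc n)) S))"

end

theory Submission
  imports Defs
begin


lemma proj_mean:
  "measure_pmf.expectation (proj_pmf z) (\<lambda>v. v) = (if \<bar>z\<bar> \<ge> 1 then sgn z else z)"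
proof (cases "\<bar>z\<bar> \<ge> 1")
  case True then show ?thesis by (simp add: proj_pmf_def)
next
  case False
  then have "0 \<le> (1 + z) / 2" "(1 + z) / 2 \<le> 1" by auto
  with False show ?thesis by (simp add: proj_pmf_def) (simp add: field_simps)
qed

lemma clip_ineq:
  fixes y z :: real
  assumes "y \<in> {-1, 1}"
  shows "1 - (if \<bar>z\<bar> \<ge> 1 then sgn z else z) * y \<le> \<bar>1 - z * y\<bar>"
  using assms by (cases "\<bar>z\<bar> \<ge> 1"; cases "z \<ge> 0") (auto simp: sgn_if abs_if)

lemma round_ineq:
  fixes w :: "nat \<Rightarrow> real" and y \<gamma> B R :: real and N :: nat
  assumes w: "\<forall>j\<in>{1..N}. w j \<in> {-1, 1}" and y: "y \<in> {-1, 1}"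
    and A_oco: "oco A N R B" and B_ge: "B \<ge> 1 + 1 / \<gamma>" and A_init: "A [] = 0"
    and N_pos: "N > 0" and gamma_pos: "\<gamma> > 0"
  shows "measure_pmf.expectation (proj_pmf ((1 / (\<gamma> * real N)) * (\<Sum>j=1..N. w j))) (\<lambda>v. v) * y
     \<ge> 1 - R / N + (1 / N) * (\<Sum>j=1..N. boost_point A \<gamma> w y j * (w j * y / \<gamma> - 1))"
proof -
  define z where "z = (1 / (\<gamma> * real N)) * (\<Sum>j=1..N. w j)"
  define ls where "ls = map (\<lambda>j. boost_loss \<gamma> (w j) y) [1..<N+1]"
  define c where "c j = w j * y / \<gamma> - 1" for j
  define C where "C = (\<Sum>j=1..N. c j)"
  have len: "length ls = N" by (simp add: ls_def)
  have nth: "ls ! k = (\<lambda>p. p * c (Suc k))" if "k < N" for k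
    using that by (simp add: ls_def boost_loss_def c_def del: upt_Suc)
  have tk: "A (take k ls) = boost_point A \<gamma> w y (Suc k)" if "k < N" for k
  proof (cases k)
    case 0 then show ?thesis by (simp add: A_init boost_point_def)
  next
    case (Suc m)
    have "take k ls = map (\<lambda>j. boost_loss \<gamma> (w j) y) [1..<Suc k]"
      using that by (simp add: ls_def take_map)
    then show ?thesis using Suc by (simp add: boost_point_def)
  qed
  have cabs: "\<bar>c j\<bar> \<le> 1 + 1 / \<gamma>" if "j \<in> {1..N}" for j
  proof -
    have "w j \<in> {-1, 1}" using w that by blast
    then have "\<bar>w j * y\<bar> = 1" using y by (auto simp: abs_mult)
    then have "\<bar>w j * y / \<gamma>\<bar> = 1 / \<gamma>" using gamma_pos by (simp add: abs_divide)
    then show ?thesis unfolding c_def by linarith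
  qed
  have conds: "\<forall>l\<in>set ls. convex_on {-1..1} l \<and> (\<forall>p\<in>{-1..1}. \<bar>l p\<bar> \<le> B)"
  proof
    fix l assume "l \<in> set ls"
    then obtain j where j: "j \<in> {1..N}" and l: "l = (\<lambda>p. p * c j)"
      by (auto simp: ls_def boost_loss_def c_def simp del: upt_Suc) (metis less_Suc_eq_le)
    have "convex_on {-1..1} l" unfolding l
      by (intro convex_on_linorderI) (auto simp: algebra_simps)
    moreover have "\<bar>l p\<bar> \<le> B" if "p \<in> {-1..1}" for p
    proof -
      have "\<bar>l p\<bar> = \<bar>p\<bar> * \<bar>c j\<bar>" by (simp add: l abs_mult)
      also have "\<dots> \<le> 1 * (1 + 1 / \<gamma>)" using that cabs[OF j]
        by (intro mult_mono) auto
      finally show ?thesis using B_ge by simp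
    qed
    ultimately show "convex_on {-1..1} l \<and> (\<forall>p\<in>{-1..1}. \<bar>l p\<bar> \<le> B)" by blast
  qed
  have reg: "(\<Sum>i<N. (ls ! i) (A (take i ls))) - (INF p\<in>{-1..1}. \<Sum>i<N. (ls ! i) p) \<le> R"
    using A_oco len conds unfolding oco_def by blast
  have shift: "(\<Sum>i<N. f (Suc i)) = (\<Sum>j=1..N. f j)" for f :: "nat \<Rightarrow> real"
    by (induction N) auto
  have s1: "(\<Sum>i<N. (ls ! i) (A (take i ls))) = (\<Sum>j=1..N. boost_point A \<gamma> w y j * c j)"
    by (subst shift[symmetric]) (auto simp: nth tk intro!: sum.cong)
  have s2: "(\<Sum>i<N. (ls ! i) p) = p * C" for p
  proof -
    have "(\<Sum>i<N. (ls ! i) p) = (\<Sum>i<N. p * c (Suc i))" by (intro sum.cong) (auto simp: nth)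
    also have "\<dots> = (\<Sum>j=1..N. p * c j)" by (rule shift)
    finally show ?thesis by (simp add: C_def sum_distrib_left)
  qed
  define p0 where "p0 = (if C \<ge> 0 then -1 else (1::real))"
  have "(INF p\<in>{-1..1}. \<Sum>i<N. (ls ! i) p) \<le> (\<Sum>i<N. (ls ! i) p0)"
  proof (rule cINF_lower)
    show "bdd_below ((\<lambda>p. \<Sum>i<N. (ls ! i) p) ` {-1..1})"
    proof (rule bdd_belowI2[where m="- \<bar>C\<bar>"])
      fix p :: real assume "p \<in> {-1..1}"
      then have "\<bar>p * C\<bar> \<le> \<bar>C\<bar>" by (auto simp: abs_mult intro: mult_left_le_one_le)
      then show "- \<bar>C\<bar> \<le> (\<Sum>i<N. (ls ! i) p)" unfolding s2 by linarith
    qed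
  qed (auto simp: p0_def)
  also have "\<dots> = - \<bar>C\<bar>" by (simp add: s2 p0_def)
  finally have inf: "(INF p\<in>{-1..1}. \<Sum>i<N. (ls ! i) p) \<le> - \<bar>C\<bar>" .
  have Cz: "C = N * (z * y - 1)"
    using N_pos gamma_pos
    by (simp add: C_def c_def z_def sum_subtractf sum_divide_distrib[symmetric] sum_distrib_right[symmetric] field_simps sum_distrib_left)
  have main: "\<bar>C\<bar> \<le> R - (\<Sum>j=1..N. boost_point A \<gamma> w y j * c j)"
    using reg s1 inf by linarith
  have "1 - (if \<bar>z\<bar> \<ge> 1 then sgn z else z) * y \<le> \<bar>1 - z * y\<bar>" by (rule clip_ineq[OF y])
  also have "\<bar>1 - z * y\<bar> = \<bar>C\<bar> / N" using N_pos by (simp add: Cz abs_mult abs_minus_commute)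
  also have "\<dots> \<le> (R - (\<Sum>j=1..N. boost_point A \<gamma> w y j * c j)) / N"
    using main N_pos by (simp add: divide_right_mono)
  finally have fin: "1 - (if \<bar>z\<bar> \<ge> 1 then sgn z else z) * y \<le> (R - (\<Sum>j=1..N. boost_point A \<gamma> w y j * c j)) / N" .
  have eq: "(R - (\<Sum>j=1..N. boost_point A \<gamma> w y j * c j)) / N = R / N - (1 / N) * (\<Sum>j=1..N. boost_point A \<gamma> w y j * c j)"
    by (simp add: diff_divide_distrib)
  show ?thesis
    unfolding proj_mean z_def[symmetric] c_def[symmetric] using fin eq by linarith
qed



lemma pmf_integrable_bnd:
  fixes f :: "_ \<Rightarrow> real"
  assumes "\<And>x. x \<in> set_pmf M \<Longrightarrow> \<bar>f x\<bar> \<le> B"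
  shows "integrable (measure_pmf M) f"
  using assms by (intro measure_pmf.integrable_const_bound[where B=B]) (auto intro: AE_pmfI)

lemma integral_bind_pmf_glob:
  fixes f :: "_ \<Rightarrow> real"
  assumes "\<And>x. \<bar>f x\<bar> \<le> B"
  shows "measure_pmf.expectation (bind_pmf M N) f = measure_pmf.expectation M (\<lambda>x. measure_pmf.expectation (N x) f)"
  unfolding measure_pmf_bind
  apply (rule integral_bind[where B=B and B'=1 and K="count_space UNIV"])
  using assms measure_pmf_in_subprob_algebra by auto

lemma integral_bind_pmf:
  fixes f :: "_ \<Rightarrow> real"
  assumes "\<And>x. x \<in> set_pmf (bind_pmf M N) \<Longrightarrow> \<bar>f x\<bar> \<le> B"
  shows "measure_pmf.expectation (bind_pmf M N) f = measure_pmf.expectation M (\<lambda>x. measure_pmf.expectation (N x) f)"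
proof -
  define g where "g x = (if x \<in> set_pmf (bind_pmf M N) then f x else 0)" for x
  obtain x0 where "x0 \<in> set_pmf (bind_pmf M N)" using set_pmf_not_empty[of "bind_pmf M N"] by blast
  hence B0: "0 \<le> B" using assms[of x0] by linarith
  have gb: "\<bar>g x\<bar> \<le> B" for x using assms[of x] B0 by (auto simp: g_def)
  have "measure_pmf.expectation (bind_pmf M N) f = measure_pmf.expectation (bind_pmf M N) g"
    by (intro integral_cong_AE) (auto simp: g_def AE_measure_pmf_iff)
  also have "\<dots> = measure_pmf.expectation M (\<lambda>x. measure_pmf.expectation (N x) g)"
    by (rule integral_bind_pmf_glob[OF gb])
  also have "\<dots> = measure_pmf.expectation M (\<lambda>x. measure_pmf.expectation (N x) f)"
    by (intro integral_cong_AE) (auto simp: g_def AE_measure_pmf_iff intro!: integral_cong_AE)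
  finally show ?thesis .
qed

lemma proj_set: "v \<in> set_pmf (proj_pmf z) \<Longrightarrow> \<bar>v\<bar> \<le> 1"
  by (auto simp: proj_pmf_def split: if_splits simp: sgn_if)

lemma bp_range:
  assumes "\<And>ls. A ls \<in> {-1..1}"
  shows "boost_point A \<gamma> w y j \<in> {-1..1}"
  using assms by (auto simp: boost_point_def)

lemma bp_cong:
  assumes "\<And>k. k \<in> {1..<j} \<Longrightarrow> w k = w' k"
  shows "boost_point A \<gamma> w y j = boost_point A \<gamma> w' y j"
proof -
  have "map (\<lambda>k. boost_loss \<gamma> (w k) y) [1..<j] = map (\<lambda>k. boost_loss \<gamma> (w' k) y) [1..<j]"
    using assms by (intro map_cong) auto
  then show ?thesis unfolding boost_point_def by (simp only:)
qed

lemma relabel_mean: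
  assumes "p \<in> {-1..1}"
  shows "measure_pmf.expectation (relabel_pmf p y) (\<lambda>b. a + c * b) = a + c * p * y"
proof -
  have "0 \<le> (1 + p) / 2" "(1 + p) / 2 \<le> 1" using assms by auto
  then show ?thesis by (simp add: relabel_pmf_def) (simp add: field_simps)
qed

lemma lin_pmf:
  fixes a c :: real
  assumes "\<And>v. v \<in> set_pmf M \<Longrightarrow> \<bar>v\<bar> \<le> 1"
  shows "measure_pmf.expectation M (\<lambda>v. a + v * c) = a + measure_pmf.expectation M (\<lambda>v. v) * c"
proof -
  have i: "integrable (measure_pmf M) (\<lambda>v. v)" by (rule pmf_integrable_bnd[where B=1]) (use assms in auto)
  have "measure_pmf.expectation M (\<lambda>v. a + v * c) = measure_pmf.expectation M (\<lambda>v. a) + measure_pmf.expectation M (\<lambda>v. v * c)"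
    by (rule Bochner_Integration.integral_add) (use i in auto)
  then show ?thesis by simp
qed

context
  fixes W :: "nat \<Rightarrow> ('s, 'x) learner" and A :: "(real \<Rightarrow> real) list \<Rightarrow> real"
    and \<gamma> :: real and N :: nat and xs :: "nat \<Rightarrow> 'x" and ys :: "nat \<Rightarrow> real"
begin

definition bpt :: "(nat \<Rightarrow> 's) \<Rightarrow> nat \<Rightarrow> nat \<Rightarrow> real" where
  "bpt S t j = boost_point A \<gamma> (\<lambda>k. lr_pred (W k) (S k) (xs t)) (ys t) j"

definition updk :: "(nat \<Rightarrow> 's) \<Rightarrow> nat \<Rightarrow> nat \<Rightarrow> 's pmf" where
  "updk S t j = relabel_pmf (bpt S t j) (ys t) \<bind> (\<lambda>yi. lr_upd (W j) (S j) (xs t) yi)"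

definition zz :: "(nat \<Rightarrow> 's) \<Rightarrow> nat \<Rightarrow> real" where
  "zz S t = (1 / (\<gamma> * real N)) * (\<Sum>k=1..N. lr_pred (W k) (S k) (xs t))"

definition FF :: "nat \<Rightarrow> (nat \<Rightarrow> 's) pmf" where
  "FF n = map_pmf fst (boost_run W A \<gamma> N xs ys n)"

lemma round_alt: "boost_round W A \<gamma> N x y S = pair_pmf
        (Pi_pmf {1..N} undefined
           (\<lambda>i. relabel_pmf (boost_point A \<gamma> (\<lambda>i. lr_pred (W i) (S i) x) y i) y \<bind> (\<lambda>yi. lr_upd (W i) (S i) x yi)))
        (proj_pmf ((1 / (\<gamma> * real N)) * (\<Sum>i=1..N. lr_pred (W i) (S i) x)))"
  by (simp add: boost_round_def Let_def)

lemma FF_Suc: "FF (Suc n) = FF n \<bind> (\<lambda>S. Pi_pmf {1..N} undefined (updk S (Suc n)))"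
proof -
  have "FF (Suc n) = boost_run W A \<gamma> N xs ys n \<bind> (\<lambda>(S, acc). Pi_pmf {1..N} undefined (updk S (Suc n)))"
    unfolding FF_def boost_run.simps map_bind_pmf
  proof (intro bind_pmf_cong refl)
    fix x :: "(nat \<Rightarrow> 's) \<times> real"
    obtain S acc where x: "x = (S, acc)" by (cases x)
    show "map_pmf fst ((\<lambda>(S, acc). map_pmf (\<lambda>(S', yhat). (S', acc + yhat * ys (Suc n)))
             (boost_round W A \<gamma> N (xs (Suc n)) (ys (Suc n)) S)) x) =
          (\<lambda>(S, acc). Pi_pmf {1..N} undefined (updk S (Suc n))) x"
      unfolding x by (simp add: pmf.map_comp o_def case_prod_unfold round_alt updk_def[abs_def] bpt_def[abs_def]
          map_fst_pair_pmf)
  qed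
  then show ?thesis unfolding FF_def by (simp add: bind_map_pmf case_prod_unfold)
qed

lemma acc_bound: "x \<in> set_pmf (boost_run W A \<gamma> N xs ys n) \<Longrightarrow> \<bar>snd x\<bar> \<le> (\<Sum>t=1..n. \<bar>ys t\<bar>)"
proof (induction n arbitrary: x)
  case 0 then show ?case by auto
next
  case (Suc n)
  from Suc.prems obtain S acc S' v where
    sa: "(S, acc) \<in> set_pmf (boost_run W A \<gamma> N xs ys n)" and
    v: "v \<in> set_pmf (proj_pmf (zz S (Suc n)))" and x: "x = (S', acc + v * ys (Suc n))"
    by (auto simp: round_alt zz_def)
  have "\<bar>acc\<bar> \<le> (\<Sum>t=1..n. \<bar>ys t\<bar>)" using Suc.IH[OF sa] by simp
  moreover have "\<bar>v * ys (Suc n)\<bar> \<le> \<bar>ys (Suc n)\<bar>" using proj_set[OF v]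
    by (simp add: abs_mult mult_left_le_one_le)
  ultimately show ?case by (simp add: x)
qed

lemma acc_step:
  "measure_pmf.expectation (boost_run W A \<gamma> N xs ys (Suc n)) snd =
   measure_pmf.expectation (boost_run W A \<gamma> N xs ys n) snd +
   measure_pmf.expectation (FF n) (\<lambda>S. measure_pmf.expectation (proj_pmf (zz S (Suc n))) (\<lambda>v. v) * ys (Suc n))"
proof -
  let ?R = "boost_run W A \<gamma> N xs ys"
  let ?B = "\<Sum>t=1..Suc n. \<bar>ys t\<bar>"
  let ?h = "\<lambda>S. measure_pmf.expectation (proj_pmf (zz S (Suc n))) (\<lambda>v. v) * ys (Suc n)"
  have hb: "\<bar>?h S\<bar> \<le> \<bar>ys (Suc n)\<bar>" for S
  proof -
    have "\<bar>measure_pmf.expectation (proj_pmf (zz S (Suc n))) (\<lambda>v. v)\<bar> \<le> 1"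
      unfolding proj_mean by (auto simp: sgn_if)
    then show ?thesis by (simp add: abs_mult mult_left_le_one_le)
  qed
  have "measure_pmf.expectation (?R (Suc n)) snd =
     measure_pmf.expectation (?R n) (\<lambda>x. measure_pmf.expectation
        ((\<lambda>(S, acc). map_pmf (\<lambda>(S', yhat). (S', acc + yhat * ys (Suc n)))
          (boost_round W A \<gamma> N (xs (Suc n)) (ys (Suc n)) S)) x) snd)"
    unfolding boost_run.simps
    by (rule integral_bind_pmf[where B="?B"]) (use acc_bound[of _ "Suc n"] in auto)
  also have "\<dots> = measure_pmf.expectation (?R n) (\<lambda>x. snd x + ?h (fst x))"
  proof (intro integral_cong_AE AE_pmfI)
    fix x assume "x \<in> set_pmf (?R n)"
    obtain S acc where x: "x = (S, acc)" by (cases x)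
    have "measure_pmf.expectation (proj_pmf (zz S (Suc n))) (\<lambda>v. acc + v * ys (Suc n)) =
          acc + measure_pmf.expectation (proj_pmf (zz S (Suc n))) (\<lambda>v. v) * ys (Suc n)"
      by (rule lin_pmf) (rule proj_set)
    then show "measure_pmf.expectation
          ((\<lambda>(S, acc). map_pmf (\<lambda>(S', yhat). (S', acc + yhat * ys (Suc n)))
          (boost_round W A \<gamma> N (xs (Suc n)) (ys (Suc n)) S)) x) snd = snd x + ?h (fst x)"
      unfolding x round_alt zz_def
      apply (simp add: case_prod_unfold)
      apply (subst expectation_pair_pmf_snd[where f="\<lambda>v. acc + v * ys (Suc n)", simplified])
      apply simp
      done
  qed simp_all
  also have "\<dots> = measure_pmf.expectation (?R n) snd + measure_pmf.expectation (?R n) (\<lambda>x. ?h (fst x))"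
  proof (rule Bochner_Integration.integral_add)
    show "integrable (measure_pmf (?R n)) snd"
      by (rule pmf_integrable_bnd[where B="\<Sum>t=1..n. \<bar>ys t\<bar>"]) (rule acc_bound)
    show "integrable (measure_pmf (?R n)) (\<lambda>x. ?h (fst x))"
      by (rule pmf_integrable_bnd[where B="\<bar>ys (Suc n)\<bar>"]) (rule hb)
  qed
  also have "measure_pmf.expectation (?R n) (\<lambda>x. ?h (fst x)) = measure_pmf.expectation (FF n) ?h"
    by (simp add: FF_def)
  finally show ?thesis .
qed

lemma acc_sum:
  "measure_pmf.expectation (boost_run W A \<gamma> N xs ys n) snd =
   (\<Sum>t=1..n. measure_pmf.expectation (FF (t - 1)) (\<lambda>S. measure_pmf.expectation (proj_pmf (zz S t)) (\<lambda>v. v) * ys t))"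
proof (induction n)
  case 0 then show ?case by simp
next
  case (Suc n) show ?case unfolding acc_step Suc.IH by simp
qed

end



lemma interact_len:
  "x \<in> set_pmf (interact W adv n) \<Longrightarrow> length (snd x) = n"
  by (induction n arbitrary: x) auto

lemma interact_set:
  assumes adv: "valid_adversary adv" and pred: "\<And>s x. lr_pred W s x \<in> {-1, 1}"
  shows "x \<in> set_pmf (interact W adv n) \<Longrightarrow> \<forall>e\<in>set (snd x). fst (snd e) \<in> {-1, 1} \<and> snd (snd e) \<in> {-1, 1}"
proof (induction n arbitrary: x)
  case 0 then show ?case by auto
next
  case (Suc n)
  from Suc.prems obtain s h x' y s' where sh: "(s, h) \<in> set_pmf (interact W adv n)"
    and xy: "(x', y) \<in> set_pmf (adv h)" and x: "x = (s', h @ [(x', y, lr_pred W s x')])"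
    by auto
  have "y \<in> {-1, 1}" using adv xy unfolding valid_adversary_def by force
  with Suc.IH[OF sh] pred[of s x'] show ?case by (auto simp: x)
qed


context
  fixes W :: "nat \<Rightarrow> ('s, 'x) learner" and A :: "(real \<Rightarrow> real) list \<Rightarrow> real"
    and \<gamma> :: real and N :: nat and xs :: "nat \<Rightarrow> 'x" and ys :: "nat \<Rightarrow> real"
    and T :: nat and i :: nat
begin

definition restr :: "(nat \<Rightarrow> 's) \<Rightarrow> nat \<Rightarrow> 's" where
  "restr S = (\<lambda>j. if j \<in> {1..<i} then S j else undefined)"

definition HK :: "(nat \<Rightarrow> 's) \<Rightarrow> nat \<Rightarrow> (nat \<Rightarrow> 's) pmf" where
  "HK Sa t = Pi_pmf {1..<i} undefined (updk W A \<gamma> xs ys Sa t)"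

primrec HP :: "nat \<Rightarrow> ((nat \<Rightarrow> 's) \<times> (nat \<Rightarrow> real)) pmf" where
  "HP 0 = map_pmf (\<lambda>S. (S, \<lambda>_. 0)) (Pi_pmf {1..<i} undefined (\<lambda>j. lr_init (W j)))"
| "HP (Suc n) = HP n \<bind> (\<lambda>(Sa, \<pi>). map_pmf (\<lambda>Sa'. (Sa', \<pi>(Suc n := bpt W A \<gamma> xs ys Sa (Suc n) i))) (HK Sa (Suc n)))"

definition adv :: "(nat \<Rightarrow> real) \<Rightarrow> 'x adversary" where
  "adv \<pi> h = (if length h < T
     then map_pmf (\<lambda>b. (xs (Suc (length h)), b)) (relabel_pmf (\<pi> (Suc (length h))) (ys (Suc (length h))))
     else return_pmf (xs (Suc (length h)), 1))"

definition LL :: "(nat \<Rightarrow> real) \<Rightarrow> nat \<Rightarrow> 's pmf" where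
  "LL \<pi> n = map_pmf fst (interact (W i) (adv \<pi>) n)"

lemma LL_0: "LL \<pi> 0 = lr_init (W i)"
  by (simp add: LL_def pmf.map_comp o_def)

lemma LL_Suc:
  assumes "n < T"
  shows "LL \<pi> (Suc n) = LL \<pi> n \<bind> (\<lambda>s. relabel_pmf (\<pi> (Suc n)) (ys (Suc n)) \<bind> lr_upd (W i) s (xs (Suc n)))"
proof -
  have "LL \<pi> (Suc n) = interact (W i) (adv \<pi>) n \<bind>
      (\<lambda>x. relabel_pmf (\<pi> (Suc n)) (ys (Suc n)) \<bind> lr_upd (W i) (fst x) (xs (Suc n)))"
    unfolding LL_def interact.simps map_bind_pmf
  proof (intro bind_pmf_cong refl)
    fix x assume x: "x \<in> set_pmf (interact (W i) (adv \<pi>) n)"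
    obtain s h where sh: "x = (s, h)" by (cases x)
    have lh: "length h = n" using interact_len[OF x] sh by simp
    show "map_pmf fst ((\<lambda>(s, h). adv \<pi> h \<bind> (\<lambda>(x, y). map_pmf (\<lambda>s'. (s', h @ [(x, y, lr_pred (W i) s x)])) (lr_upd (W i) s x y))) x)
       = relabel_pmf (\<pi> (Suc n)) (ys (Suc n)) \<bind> lr_upd (W i) (fst x) (xs (Suc n))"
      unfolding sh using assms lh
      by (simp add: adv_def map_bind_pmf bind_map_pmf pmf.map_comp o_def)
  qed
  then show ?thesis by (simp add: LL_def bind_map_pmf)
qed

lemma interact_cong:
  assumes "\<And>t. t \<in> {1..n} \<Longrightarrow> \<pi> t = \<pi>' t"
  shows "interact (W i) (adv \<pi>) n = interact (W i) (adv \<pi>') n"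
  using assms
proof (induction n)
  case 0 then show ?case by simp
next
  case (Suc n)
  have IH: "interact (W i) (adv \<pi>) n = interact (W i) (adv \<pi>') n" using Suc by auto
  show ?case unfolding interact.simps IH
  proof (intro bind_pmf_cong refl)
    fix x assume x: "x \<in> set_pmf (interact (W i) (adv \<pi>') n)"
    obtain s h where sh: "x = (s, h)" by (cases x)
    have lh: "length h = n" using interact_len[OF x] sh by simp
    have "adv \<pi> h = adv \<pi>' h" using Suc.prems[of "Suc n"] lh by (simp add: adv_def)
    then show "(\<lambda>(s, h). adv \<pi> h \<bind> (\<lambda>(x, y). map_pmf (\<lambda>s'. (s', h @ [(x, y, lr_pred (W i) s x)])) (lr_upd (W i) s x y))) x =
       (\<lambda>(s, h). adv \<pi>' h \<bind> (\<lambda>(x, y). map_pmf (\<lambda>s'. (s', h @ [(x, y, lr_pred (W i) s x)])) (lr_upd (W i) s x y))) x"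
      by (simp add: sh)
  qed
qed

lemma LL_cong:
  assumes "\<And>t. t \<in> {1..n} \<Longrightarrow> \<pi> t = \<pi>' t"
  shows "LL \<pi> n = LL \<pi>' n"
  using interact_cong[OF assms] by (simp add: LL_def)

lemma HP_set:
  assumes A_rng: "\<And>ls. A ls \<in> {-1..1}"
  shows "x \<in> set_pmf (HP n) \<Longrightarrow> (\<forall>t>n. snd x t = 0) \<and> (\<forall>t. snd x t \<in> {-1..1})"
proof (induction n arbitrary: x)
  case 0 then show ?case by auto
next
  case (Suc n)
  from Suc.prems obtain Sa \<pi> Sa' where sp: "(Sa, \<pi>) \<in> set_pmf (HP n)"
    and x: "x = (Sa', \<pi>(Suc n := bpt W A \<gamma> xs ys Sa (Suc n) i))"
    by auto
  have "bpt W A \<gamma> xs ys Sa (Suc n) i \<in> {-1..1}" unfolding bpt_def by (rule bp_range[OF A_rng])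
  with Suc.IH[OF sp] show ?case by (auto simp: x)
qed


definition trunc :: "nat \<Rightarrow> (nat \<Rightarrow> real) \<Rightarrow> nat \<Rightarrow> real" where
  "trunc k \<pi> = (\<lambda>j. if j \<le> k then \<pi> j else 0)"

lemma HP_trunc:
  assumes "k \<le> m"
  shows "map_pmf (\<lambda>x. trunc k (snd x)) (HP m) = map_pmf (\<lambda>x. trunc k (snd x)) (HP k)"
  using assms
proof (induction m rule: dec_induct)
  case base then show ?case by simp
next
  case (step m)
  have "map_pmf (\<lambda>x. trunc k (snd x)) (HP (Suc m)) =
        HP m \<bind> (\<lambda>x. return_pmf (trunc k (snd x)))"
    unfolding HP.simps map_bind_pmf
  proof (intro bind_pmf_cong refl)
    fix x :: "(nat \<Rightarrow> 's) \<times> (nat \<Rightarrow> real)"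
    obtain Sa \<pi> where x: "x = (Sa, \<pi>)" by (cases x)
    have "trunc k (\<pi>(Suc m := v)) = trunc k \<pi>" for v
      using step.hyps by (auto simp: trunc_def fun_eq_iff)
    then show "map_pmf (\<lambda>x. trunc k (snd x)) ((\<lambda>(Sa, \<pi>). map_pmf (\<lambda>Sa'. (Sa', \<pi>(Suc m := bpt W A \<gamma> xs ys Sa (Suc m) i))) (HK Sa (Suc m))) x)
      = return_pmf (trunc k (snd x))"
      by (simp add: x pmf.map_comp o_def)
  qed
  also have "\<dots> = map_pmf (\<lambda>x. trunc k (snd x)) (HP m)" by (simp add: map_pmf_def)
  finally show ?case using step.IH by simp
qed

lemma HP_exp_trunc:
  fixes G :: "(nat \<Rightarrow> real) \<Rightarrow> real"
  assumes "k \<le> m" and G: "\<And>\<pi>. G \<pi> = G (trunc k \<pi>)"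
  shows "measure_pmf.expectation (HP m) (\<lambda>x. G (snd x)) = measure_pmf.expectation (HP k) (\<lambda>x. G (snd x))"
proof -
  have "measure_pmf.expectation (HP m) (\<lambda>x. G (snd x)) = measure_pmf.expectation (map_pmf (\<lambda>x. trunc k (snd x)) (HP m)) G"
    by (simp flip: G)
  also have "\<dots> = measure_pmf.expectation (map_pmf (\<lambda>x. trunc k (snd x)) (HP k)) G"
    by (simp only: HP_trunc[OF assms(1)])
  also have "\<dots> = measure_pmf.expectation (HP k) (\<lambda>x. G (snd x))"
    by (simp flip: G)
  finally show ?thesis .
qed

lemma Pi_marg:
  assumes "i \<in> {1..N}"
  shows "map_pmf (\<lambda>S. (restr S, S i)) (Pi_pmf {1..N} undefined p) = pair_pmf (Pi_pmf {1..<i} undefined p) (p i)"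
proof -
  have U: "{1..N} = {1..<i} \<union> {i..N}" using assms by auto
  have "map_pmf (\<lambda>S. (restr S, S i)) (Pi_pmf {1..N} undefined p) =
     map_pmf (\<lambda>S. (restr S, S i)) (map_pmf (\<lambda>(f,g) x. if x \<in> {1..<i} then f x else g x)
             (pair_pmf (Pi_pmf {1..<i} undefined p) (Pi_pmf {i..N} undefined p)))"
    unfolding U by (subst Pi_pmf_union) auto
  also have "\<dots> = map_pmf (\<lambda>(f, g). (f, g i)) (pair_pmf (Pi_pmf {1..<i} undefined p) (Pi_pmf {i..N} undefined p))"
    unfolding pmf.map_comp
  proof (intro map_pmf_cong refl)
    fix x assume x: "x \<in> set_pmf (pair_pmf (Pi_pmf {1..<i} undefined p) (Pi_pmf {i..N} undefined p))"
    obtain f g where fg: "x = (f, g)" by (cases x)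
    have "f \<in> set_pmf (Pi_pmf {1..<i} undefined p)" using x fg by (auto simp: set_pair_pmf)
    then have "\<forall>y. y \<notin> {1..<i} \<longrightarrow> f y = undefined" using set_Pi_pmf_subset[of "{1..<i}" undefined p] by auto
    then show "((\<lambda>S. (restr S, S i)) \<circ> (\<lambda>(f, g) x. if x \<in> {1..<i} then f x else g x)) x = (\<lambda>(f, g). (f, g i)) x"
      by (auto simp: fg restr_def fun_eq_iff)
  qed
  also have "\<dots> = pair_pmf (map_pmf (\<lambda>f. f) (Pi_pmf {1..<i} undefined p)) (map_pmf (\<lambda>g. g i) (Pi_pmf {i..N} undefined p))"
    by (rule map_pair)
  also have "\<dots> = pair_pmf (Pi_pmf {1..<i} undefined p) (p i)"
    using assms by (simp add: Pi_pmf_component)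
  finally show ?thesis .
qed

definition UU :: "(nat \<Rightarrow> 's) \<Rightarrow> 's \<Rightarrow> nat \<Rightarrow> 's pmf" where
  "UU Sa s t = relabel_pmf (bpt W A \<gamma> xs ys Sa t i) (ys t) \<bind> lr_upd (W i) s (xs t)"

lemma bpt_restr: "j \<le> i \<Longrightarrow> bpt W A \<gamma> xs ys S t j = bpt W A \<gamma> xs ys (restr S) t j"
  unfolding bpt_def by (rule bp_cong) (auto simp: restr_def)

lemma updk_restr: "j \<in> {1..<i} \<Longrightarrow> updk W A \<gamma> xs ys S t j = updk W A \<gamma> xs ys (restr S) t j"
  unfolding updk_def using bpt_restr[of j S t] by (auto simp: restr_def)

lemma updk_i: "updk W A \<gamma> xs ys S t i = UU (restr S) (S i) t"
  unfolding updk_def UU_def using bpt_restr[of i S t] by simp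

end



lemma sum_list_bound:
  fixes \<phi> :: "_ \<Rightarrow> real"
  shows "(\<forall>e\<in>set h. \<bar>\<phi> e\<bar> \<le> 1) \<Longrightarrow> \<bar>sum_list (map \<phi> h)\<bar> \<le> length h"
  by (induction h) (auto simp: abs_le_iff)

lemma relabel_set: "b \<in> set_pmf (relabel_pmf p y) \<Longrightarrow> b = y \<or> b = - y"
  by (auto simp: relabel_pmf_def)

lemma exp_abs_bound:
  fixes g :: "_ \<Rightarrow> real"
  assumes "\<And>x. x \<in> set_pmf M \<Longrightarrow> \<bar>g x\<bar> \<le> B"
  shows "\<bar>measure_pmf.expectation M g\<bar> \<le> B"
proof -
  have "\<bar>measure_pmf.expectation M g\<bar> \<le> measure_pmf.expectation M (\<lambda>x. \<bar>g x\<bar>)"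
    by (rule integral_abs_bound)
  also have "\<dots> \<le> B"
    by (rule measure_pmf.integral_le_const) (auto intro!: pmf_integrable_bnd[where B=B] AE_pmfI assms)
  finally show ?thesis .
qed
context
  fixes W :: "nat \<Rightarrow> ('s, 'x) learner" and A :: "(real \<Rightarrow> real) list \<Rightarrow> real"
    and \<gamma> :: real and N :: nat and xs :: "nat \<Rightarrow> 'x" and ys :: "nat \<Rightarrow> real"
    and T :: nat and i :: nat
begin
abbreviation "rst \<equiv> restr i"
abbreviation "HKi \<equiv> HK W A \<gamma> xs ys i"
abbreviation "HPi \<equiv> HP W A \<gamma> xs ys i"
abbreviation "LLi \<equiv> LL W xs ys T i"
abbreviation "UUi \<equiv> UU W A \<gamma> xs ys i"
abbreviation "advi \<equiv> adv xs ys T"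

lemma commute:
  assumes i: "i \<in> {1..N}" and "n \<le> T"
  shows "map_pmf (\<lambda>S. (rst S, S i)) (FF W A \<gamma> N xs ys n) =
         HPi n \<bind> (\<lambda>(Sa, \<pi>). map_pmf (\<lambda>s. (Sa, s)) (LLi \<pi> n))"
  using assms(2)
proof (induction n)
  case 0
  have "map_pmf (\<lambda>S. (rst S, S i)) (FF W A \<gamma> N xs ys 0) = pair_pmf (Pi_pmf {1..<i} undefined (\<lambda>j. lr_init (W j))) (lr_init (W i))"
    unfolding FF_def boost_run.simps pmf.map_comp o_def fst_conv by (rule Pi_marg[OF i])
  also have "\<dots> = Pi_pmf {1..<i} undefined (\<lambda>j. lr_init (W j)) \<bind> (\<lambda>S. map_pmf (\<lambda>s. (S, s)) (lr_init (W i)))"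
    by (simp add: pair_pmf_def map_pmf_def)
  also have "\<dots> = HPi 0 \<bind> (\<lambda>(Sa, \<pi>). map_pmf (\<lambda>s. (Sa, s)) (LLi \<pi> 0))"
    by (simp add: bind_map_pmf LL_0)
  finally show ?case .
next
  case (Suc n)
  let ?t = "Suc n"
  let ?G = "\<lambda>(Sa, s). pair_pmf (HKi Sa ?t) (UUi Sa s ?t)"
  have "map_pmf (\<lambda>S. (rst S, S i)) (FF W A \<gamma> N xs ys (Suc n)) =
        FF W A \<gamma> N xs ys n \<bind> (\<lambda>S. map_pmf (\<lambda>S. (rst S, S i)) (Pi_pmf {1..N} undefined (updk W A \<gamma> xs ys S ?t)))"
    by (simp add: FF_Suc map_bind_pmf)
  also have "\<dots> = FF W A \<gamma> N xs ys n \<bind> (\<lambda>S. ?G (rst S, S i))"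
  proof (intro bind_pmf_cong refl)
    fix S :: "nat \<Rightarrow> 's"
    have HKeq: "Pi_pmf {1..<i} undefined (updk W A \<gamma> xs ys S ?t) = HKi (rst S) ?t"
      unfolding HK_def by (intro Pi_pmf_cong refl) (simp add: updk_restr)
    have "map_pmf (\<lambda>S. (rst S, S i)) (Pi_pmf {1..N} undefined (updk W A \<gamma> xs ys S ?t))
       = pair_pmf (Pi_pmf {1..<i} undefined (updk W A \<gamma> xs ys S ?t)) (updk W A \<gamma> xs ys S ?t i)"
      by (rule Pi_marg[OF i])
    also have "\<dots> = pair_pmf (HKi (rst S) ?t) (UUi (rst S) (S i) ?t)"
      by (simp only: HKeq updk_i[of W A \<gamma> xs ys S ?t i])
    finally show "map_pmf (\<lambda>S. (rst S, S i)) (Pi_pmf {1..N} undefined (updk W A \<gamma> xs ys S ?t)) = ?G (rst S, S i)"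
      by simp
  qed
  also have "\<dots> = map_pmf (\<lambda>S. (rst S, S i)) (FF W A \<gamma> N xs ys n) \<bind> ?G"
    by (simp add: bind_map_pmf)
  also have "\<dots> = HPi n \<bind> (\<lambda>(Sa, \<pi>). LLi \<pi> n \<bind> (\<lambda>s. HKi Sa ?t \<bind> (\<lambda>Sa'. map_pmf (\<lambda>s'. (Sa', s')) (UUi Sa s ?t))))"
    using Suc by (simp add: bind_assoc_pmf bind_map_pmf case_prod_unfold pair_pmf_def map_pmf_def bind_return_pmf)
  also have "\<dots> = HPi n \<bind> (\<lambda>(Sa, \<pi>). HKi Sa ?t \<bind> (\<lambda>Sa'. LLi \<pi> n \<bind> (\<lambda>s. map_pmf (\<lambda>s'. (Sa', s')) (UUi Sa s ?t))))"
    by (subst bind_commute_pmf) (rule refl)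
  also have "\<dots> = HPi (Suc n) \<bind> (\<lambda>(Sa, \<pi>). map_pmf (\<lambda>s. (Sa, s)) (LLi \<pi> (Suc n)))"
    unfolding HP.simps bind_assoc_pmf
  proof (intro bind_pmf_cong refl)
    fix x :: "(nat \<Rightarrow> 's) \<times> (nat \<Rightarrow> real)"
    obtain Sa \<pi> where x: "x = (Sa, \<pi>)" by (cases x)
    let ?\<pi>' = "\<pi>(?t := bpt W A \<gamma> xs ys Sa ?t i)"
    have "LLi ?\<pi>' (Suc n) = LLi ?\<pi>' n \<bind> (\<lambda>s. relabel_pmf (?\<pi>' ?t) (ys ?t) \<bind> lr_upd (W i) s (xs ?t))"
      using Suc.prems by (intro LL_Suc) simp
    also have "LLi ?\<pi>' n = LLi \<pi> n" by (intro LL_cong) auto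
    finally have L: "LLi ?\<pi>' (Suc n) = LLi \<pi> n \<bind> (\<lambda>s. UUi Sa s ?t)" by (simp add: UU_def fun_upd_same del: fun_upd_apply)
    show "(\<lambda>(Sa, \<pi>). HKi Sa ?t \<bind> (\<lambda>Sa'. LLi \<pi> n \<bind> (\<lambda>s. map_pmf (\<lambda>s'. (Sa', s')) (UUi Sa s ?t)))) x =
      (\<lambda>(Sa, \<pi>). map_pmf (\<lambda>Sa'. (Sa', \<pi>(?t := bpt W A \<gamma> xs ys Sa ?t i))) (HKi Sa ?t)) x \<bind>
      (\<lambda>(Sa, \<pi>). map_pmf (\<lambda>s. (Sa, s)) (LLi \<pi> (Suc n)))"
      by (simp add: x bind_map_pmf L map_bind_pmf)
  qed
  finally show ?case .
qed


lemma exp_transfer: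
  fixes g :: "'s \<Rightarrow> real"
  assumes i: "i \<in> {1..N}" and t: "t \<in> {1..T}" and A_rng: "\<And>ls. A ls \<in> {-1..1}"
    and gb: "\<And>s. \<bar>g s\<bar> \<le> Bg"
  shows "measure_pmf.expectation (FF W A \<gamma> N xs ys (t - 1)) (\<lambda>S. bpt W A \<gamma> xs ys S t i * g (S i)) =
         measure_pmf.expectation (HPi T) (\<lambda>x. snd x t * measure_pmf.expectation (LLi (snd x) (t - 1)) g)"
proof -
  have Bg0: "0 \<le> Bg" using gb[of undefined] by linarith
  have bptb: "\<bar>bpt W A \<gamma> xs ys Sa t i\<bar> \<le> 1" for Sa
    using bp_range[OF A_rng] unfolding bpt_def by (simp add: abs_le_iff)
  have prodb: "\<bar>a * b\<bar> \<le> Bg" if "\<bar>a\<bar> \<le> 1" "\<bar>b\<bar> \<le> Bg" for a b :: real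
  proof -
    have "\<bar>a * b\<bar> = \<bar>a\<bar> * \<bar>b\<bar>" by (simp add: abs_mult)
    also have "\<dots> \<le> 1 * Bg" using that by (intro mult_mono) auto
    finally show ?thesis by simp
  qed
  let ?f = "\<lambda>(Sa, s). bpt W A \<gamma> xs ys Sa t i * g s"
  have "measure_pmf.expectation (FF W A \<gamma> N xs ys (t - 1)) (\<lambda>S. bpt W A \<gamma> xs ys S t i * g (S i)) =
        measure_pmf.expectation (map_pmf (\<lambda>S. (rst S, S i)) (FF W A \<gamma> N xs ys (t - 1))) ?f"
    by (simp add: bpt_restr[of i i, OF order_refl, symmetric])
  also have "\<dots> = measure_pmf.expectation (HPi (t - 1) \<bind> (\<lambda>(Sa, \<pi>). map_pmf (\<lambda>s. (Sa, s)) (LLi \<pi> (t - 1)))) ?f"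
    using t by (subst commute[OF i]) auto
  also have "\<dots> = measure_pmf.expectation (HPi (t - 1)) (\<lambda>x. measure_pmf.expectation ((\<lambda>(Sa, \<pi>). map_pmf (\<lambda>s. (Sa, s)) (LLi \<pi> (t - 1))) x) ?f)"
    by (rule integral_bind_pmf[where B=Bg]) (auto intro!: prodb bptb gb)
  also have "\<dots> = measure_pmf.expectation (HPi (t - 1)) (\<lambda>x. bpt W A \<gamma> xs ys (fst x) t i * measure_pmf.expectation (LLi (snd x) (t - 1)) g)"
    by (intro Bochner_Integration.integral_cong refl) (auto simp: case_prod_unfold)
  finally have L: "measure_pmf.expectation (FF W A \<gamma> N xs ys (t - 1)) (\<lambda>S. bpt W A \<gamma> xs ys S t i * g (S i)) =
     measure_pmf.expectation (HPi (t - 1)) (\<lambda>x. bpt W A \<gamma> xs ys (fst x) t i * measure_pmf.expectation (LLi (snd x) (t - 1)) g)" .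
  define Gf where "Gf \<pi> = \<pi> t * measure_pmf.expectation (LLi \<pi> (t - 1)) g" for \<pi>
  have Gtr: "Gf \<pi> = Gf (trunc t \<pi>)" for \<pi>
  proof -
    have "LLi \<pi> (t - 1) = LLi (trunc t \<pi>) (t - 1)" by (intro LL_cong) (auto simp: trunc_def)
    then show ?thesis by (simp add: Gf_def trunc_def)
  qed
  have Gupd: "Gf (\<pi>(t := v)) = v * measure_pmf.expectation (LLi \<pi> (t - 1)) g" for \<pi> v
  proof -
    have "LLi (\<pi>(t := v)) (t - 1) = LLi \<pi> (t - 1)" by (intro LL_cong) auto
    then show ?thesis by (simp add: Gf_def)
  qed
  have tT: "t \<le> T" and tS: "t = Suc (t - 1)" using t by auto
  have "measure_pmf.expectation (HPi T) (\<lambda>x. Gf (snd x)) = measure_pmf.expectation (HPi t) (\<lambda>x. Gf (snd x))"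
    by (rule HP_exp_trunc[where G=Gf, OF tT Gtr])
  also have "\<dots> = measure_pmf.expectation (HPi (t - 1)) (\<lambda>x. measure_pmf.expectation
      ((\<lambda>(Sa, \<pi>). map_pmf (\<lambda>Sa'. (Sa', \<pi>(t := bpt W A \<gamma> xs ys Sa t i))) (HKi Sa t)) x) (\<lambda>x. Gf (snd x)))"
  proof -
    have "HPi t = HPi (t - 1) \<bind> (\<lambda>(Sa, \<pi>). map_pmf (\<lambda>Sa'. (Sa', \<pi>(t := bpt W A \<gamma> xs ys Sa t i))) (HKi Sa t))"
    proof -
      obtain m where m: "t = Suc m" using t by (cases t) auto
      show ?thesis by (simp only: m diff_Suc_1 HP.simps)
    qed
    then show ?thesis
    proof (simp only:, intro integral_bind_pmf[where B=Bg])
      fix x assume x: "x \<in> set_pmf (HPi (t - 1) \<bind> (\<lambda>(Sa, \<pi>). map_pmf (\<lambda>Sa'. (Sa', \<pi>(t := bpt W A \<gamma> xs ys Sa t i))) (HKi Sa t)))"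
      then have "x \<in> set_pmf (HPi t)" using \<open>HPi t = _\<close> by simp
      then have "snd x t \<in> {-1..1}" by (intro HP_set[OF A_rng, THEN conjunct2, rule_format])
      then have "\<bar>snd x t\<bar> \<le> 1" by (auto simp: abs_le_iff)
      moreover have "\<bar>measure_pmf.expectation (LLi (snd x) (t - 1)) g\<bar> \<le> Bg"
        by (rule exp_abs_bound) (rule gb)
      ultimately show "\<bar>Gf (snd x)\<bar> \<le> Bg" unfolding Gf_def by (rule prodb)
    qed
  qed
  also have "\<dots> = measure_pmf.expectation (HPi (t - 1)) (\<lambda>x. bpt W A \<gamma> xs ys (fst x) t i * measure_pmf.expectation (LLi (snd x) (t - 1)) g)"
    by (intro Bochner_Integration.integral_cong refl) (auto simp: case_prod_unfold Gupd)
  finally show ?thesis unfolding L Gf_def by simp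
qed


lemma adv_valid:
  assumes ys_pm: "\<And>t. t \<in> {1..T} \<Longrightarrow> ys t \<in> {-1, 1}"
  shows "valid_adversary (advi \<pi>)"
  unfolding valid_adversary_def
proof (intro allI subsetI)
  fix h y assume y: "y \<in> snd ` set_pmf (advi \<pi> h)"
  show "y \<in> {-1, 1}"
  proof (cases "length h < T")
    case True
    then have "ys (Suc (length h)) \<in> {-1, 1}" using ys_pm by auto
    with True y show ?thesis by (auto simp: adv_def dest!: relabel_set)
  next
    case False with y show ?thesis by (auto simp: adv_def)
  qed
qed

lemma Phi_bound:
  fixes f :: "'x \<Rightarrow> real \<Rightarrow> real"
  assumes ys_pm: "\<And>t. t \<in> {1..T} \<Longrightarrow> ys t \<in> {-1, 1}"
    and pred: "\<And>s x. lr_pred (W i) s x \<in> {-1, 1}"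
    and fb: "\<And>x w. w \<in> {-1, 1} \<Longrightarrow> \<bar>f x w\<bar> \<le> 1"
    and z: "z \<in> set_pmf (interact (W i) (advi \<pi>) m)"
  shows "\<bar>(\<lambda>(s, h). \<Sum>(x, y, w)\<leftarrow>h. f x w * y) z\<bar> \<le> m"
proof -
  obtain s h where zs: "z = (s, h)" by (cases z)
  have len: "length h = m" using interact_len[OF z] zs by simp
  have st: "\<forall>e\<in>set h. fst (snd e) \<in> {-1, 1} \<and> snd (snd e) \<in> {-1, 1}"
    using interact_set[OF adv_valid[OF ys_pm] pred z] zs by simp
  have "\<bar>sum_list (map (\<lambda>(x, y, w). f x w * y) h)\<bar> \<le> length h"
  proof (rule sum_list_bound, rule ballI)
    fix e assume e: "e \<in> set h"
    obtain x y w where exyw: "e = (x, y, w)" by (cases e) auto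
    have "y \<in> {-1, 1}" "w \<in> {-1, 1}" using st e exyw by auto
    then have "\<bar>f x w * y\<bar> \<le> 1" using fb[of w x] by (auto simp: abs_mult)
    then show "\<bar>(\<lambda>(x, y, w). f x w * y) e\<bar> \<le> 1" by (simp add: exyw)
  qed
  then show ?thesis by (simp add: zs len)
qed

lemma exp_interact:
  fixes f :: "'x \<Rightarrow> real \<Rightarrow> real"
  assumes ys_pm: "\<And>t. t \<in> {1..T} \<Longrightarrow> ys t \<in> {-1, 1}"
    and pred: "\<And>s x. lr_pred (W i) s x \<in> {-1, 1}"
    and fb: "\<And>x w. w \<in> {-1, 1} \<Longrightarrow> \<bar>f x w\<bar> \<le> 1"
    and \<pi>r: "\<And>t. \<pi> t \<in> {-1..1}"
  shows "n \<le> T \<Longrightarrow> measure_pmf.expectation (interact (W i) (advi \<pi>) n) (\<lambda>(s, h). \<Sum>(x, y, w)\<leftarrow>h. f x w * y) =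
     (\<Sum>t=1..n. measure_pmf.expectation (interact (W i) (advi \<pi>) (t - 1)) (\<lambda>z. f (xs t) (lr_pred (W i) (fst z) (xs t))) * \<pi> t * ys t)"
proof (induction n)
  case 0 then show ?case by simp
next
  case (Suc n)
  let ?I = "interact (W i) (advi \<pi>)"
  let ?\<Phi> = "\<lambda>(s, h). \<Sum>(x, y, w)\<leftarrow>h. f x w * y"
  let ?K = "\<lambda>(s, h). advi \<pi> h \<bind> (\<lambda>(x, y). map_pmf (\<lambda>s'. (s', h @ [(x, y, lr_pred (W i) s x)])) (lr_upd (W i) s x y))"
  let ?g = "\<lambda>z. f (xs (Suc n)) (lr_pred (W i) (fst z) (xs (Suc n)))"
  have fg: "\<bar>?g z\<bar> \<le> 1" for z using fb pred by blast
  have "measure_pmf.expectation (?I (Suc n)) ?\<Phi> = measure_pmf.expectation (?I n) (\<lambda>z. measure_pmf.expectation (?K z) ?\<Phi>)"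
    unfolding interact.simps
    by (rule integral_bind_pmf[where B="Suc n"]) (rule Phi_bound[OF ys_pm pred fb, where \<pi>=\<pi>], unfold interact.simps, assumption)
  also have "\<dots> = measure_pmf.expectation (?I n) (\<lambda>z. ?\<Phi> z + ?g z * (\<pi> (Suc n) * ys (Suc n)))"
  proof (intro integral_cong_AE AE_pmfI)
    fix z assume z: "z \<in> set_pmf (?I n)"
    obtain s h where zs: "z = (s, h)" by (cases z)
    have len: "length h = n" using interact_len[OF z] zs by simp
    let ?x0 = "xs (Suc n)" let ?w0 = "lr_pred (W i) s (xs (Suc n))"
    have "?K z = relabel_pmf (\<pi> (Suc n)) (ys (Suc n)) \<bind> (\<lambda>b. map_pmf (\<lambda>s'. (s', h @ [(?x0, b, ?w0)])) (lr_upd (W i) s ?x0 b))"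
      using len Suc.prems unfolding zs adv_def by (simp add: bind_map_pmf)
    then have "map_pmf ?\<Phi> (?K z) = relabel_pmf (\<pi> (Suc n)) (ys (Suc n)) \<bind> (\<lambda>b. return_pmf (?\<Phi> z + f ?x0 ?w0 * b))"
      by (simp add: map_bind_pmf pmf.map_comp o_def zs)
    then have mK: "map_pmf ?\<Phi> (?K z) = map_pmf (\<lambda>b. ?\<Phi> z + f ?x0 ?w0 * b) (relabel_pmf (\<pi> (Suc n)) (ys (Suc n)))"
      by (simp add: map_pmf_def)
    have "measure_pmf.expectation (?K z) ?\<Phi> = measure_pmf.expectation (map_pmf ?\<Phi> (?K z)) (\<lambda>v. v)"
      by simp
    also have "\<dots> = measure_pmf.expectation (relabel_pmf (\<pi> (Suc n)) (ys (Suc n))) (\<lambda>b. ?\<Phi> z + f ?x0 ?w0 * b)"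
      unfolding mK by simp
    also have "\<dots> = ?\<Phi> z + f ?x0 ?w0 * \<pi> (Suc n) * ys (Suc n)"
      by (rule relabel_mean[OF \<pi>r])
    finally show "measure_pmf.expectation (?K z) ?\<Phi> = ?\<Phi> z + ?g z * (\<pi> (Suc n) * ys (Suc n))"
      by (simp add: zs)
  qed simp_all
  also have "\<dots> = measure_pmf.expectation (?I n) ?\<Phi> + measure_pmf.expectation (?I n) ?g * (\<pi> (Suc n) * ys (Suc n))"
  proof -
    have i1: "integrable (measure_pmf (?I n)) ?\<Phi>"
      by (rule pmf_integrable_bnd[where B=n]) (rule Phi_bound[OF ys_pm pred fb])
    have i2: "integrable (measure_pmf (?I n)) ?g"
      by (rule pmf_integrable_bnd[where B=1]) (rule fg)
    show ?thesis using i1 i2 by simp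
  qed
  finally show ?case using Suc by simp
qed


lemma awol_pi:
  assumes aw: "awol (W i) \<gamma> T RW H" and h: "h \<in> H" and H_pm1: "\<forall>h\<in>H. \<forall>x. h x \<in> {-1, 1}"
    and gp: "\<gamma> > 0" and ys_pm: "\<And>t. t \<in> {1..T} \<Longrightarrow> ys t \<in> {-1, 1}"
    and \<pi>r: "\<And>t. \<pi> t \<in> {-1..1}"
  shows "\<gamma> * (\<Sum>t=1..T. h (xs t) * \<pi> t * ys t) - RW T \<le>
         (\<Sum>t=1..T. measure_pmf.expectation (LLi \<pi> (t - 1)) (\<lambda>s. lr_pred (W i) s (xs t)) * \<pi> t * ys t)"
proof -
  have pred: "\<And>s x. lr_pred (W i) s x \<in> {-1, 1}" using aw unfolding awol_def by blast
  have main: "measure_pmf.expectation (interact (W i) (advi \<pi>) T) (\<lambda>(s, h). \<Sum>(x, y, w)\<leftarrow>h. w * y)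
        \<ge> \<gamma> * (SUP c\<in>H. measure_pmf.expectation (interact (W i) (advi \<pi>) T) (\<lambda>(s, h). \<Sum>(x, y, w)\<leftarrow>h. c x * y)) - RW T"
    using aw adv_valid[OF ys_pm] unfolding awol_def by blast
  have Ew: "measure_pmf.expectation (interact (W i) (advi \<pi>) T) (\<lambda>(s, h). \<Sum>(x, y, w)\<leftarrow>h. w * y) =
     (\<Sum>t=1..T. measure_pmf.expectation (LLi \<pi> (t - 1)) (\<lambda>s. lr_pred (W i) s (xs t)) * \<pi> t * ys t)"
  proof -
    have "measure_pmf.expectation (interact (W i) (advi \<pi>) T) (\<lambda>(s, h). \<Sum>(x, y, w)\<leftarrow>h. w * y) =
      (\<Sum>t=1..T. measure_pmf.expectation (interact (W i) (advi \<pi>) (t - 1)) (\<lambda>z. lr_pred (W i) (fst z) (xs t)) * \<pi> t * ys t)"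
      by (rule exp_interact) (use ys_pm pred \<pi>r in \<open>auto simp: abs_le_iff\<close>)
    then show ?thesis by (simp add: LL_def)
  qed
  have Ec: "measure_pmf.expectation (interact (W i) (advi \<pi>) T) (\<lambda>(s, h). \<Sum>(x, y, w)\<leftarrow>h. c x * y) =
     (\<Sum>t=1..T. c (xs t) * \<pi> t * ys t)" if c: "c \<in> H" for c
  proof -
    have "\<bar>c x\<bar> \<le> 1" for x
    proof -
      have "c x \<in> {-1, 1}" using H_pm1 c by blast
      then show ?thesis by auto
    qed
    then have "measure_pmf.expectation (interact (W i) (advi \<pi>) T) (\<lambda>(s, h). \<Sum>(x, y, w)\<leftarrow>h. c x * y) =
      (\<Sum>t=1..T. measure_pmf.expectation (interact (W i) (advi \<pi>) (t - 1)) (\<lambda>z. c (xs t)) * \<pi> t * ys t)"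
      by (intro exp_interact) (use ys_pm pred \<pi>r in auto)
    then show ?thesis by simp
  qed
  have tb: "c (xs t) * \<pi> t * ys t \<le> 1" if "c \<in> H" "t \<in> {1..T}" for c t
  proof -
    have "c (xs t) \<in> {-1, 1}" "ys t \<in> {-1, 1}" using H_pm1 that ys_pm[of t] by blast+
    then have "\<bar>c (xs t)\<bar> = 1" "\<bar>ys t\<bar> = 1" by auto
    moreover have "\<bar>\<pi> t\<bar> \<le> 1" using \<pi>r[of t] by auto
    ultimately have "\<bar>c (xs t) * \<pi> t * ys t\<bar> \<le> 1" by (simp add: abs_mult)
    then show ?thesis by simp
  qed
  have bdd: "bdd_above ((\<lambda>c. measure_pmf.expectation (interact (W i) (advi \<pi>) T) (\<lambda>(s, h). \<Sum>(x, y, w)\<leftarrow>h. c x * y)) ` H)"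
  proof (rule bdd_aboveI2[where M="real T"])
    fix c assume c: "c \<in> H"
    have "(\<Sum>t=1..T. c (xs t) * \<pi> t * ys t) \<le> (\<Sum>t=1..T. 1)" by (rule sum_mono) (rule tb[OF c])
    then show "measure_pmf.expectation (interact (W i) (advi \<pi>) T) (\<lambda>(s, h). \<Sum>(x, y, w)\<leftarrow>h. c x * y) \<le> real T"
      by (simp add: Ec[OF c])
  qed
  have "(\<Sum>t=1..T. h (xs t) * \<pi> t * ys t) \<le> (SUP c\<in>H. measure_pmf.expectation (interact (W i) (advi \<pi>) T) (\<lambda>(s, h). \<Sum>(x, y, w)\<leftarrow>h. c x * y))"
    using cSUP_upper[OF h bdd] by (simp add: Ec[OF h])
  then have "\<gamma> * (\<Sum>t=1..T. h (xs t) * \<pi> t * ys t) \<le> \<gamma> * (SUP c\<in>H. measure_pmf.expectation (interact (W i) (advi \<pi>) T) (\<lambda>(s, h). \<Sum>(x, y, w)\<leftarrow>h. c x * y))"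
    using gp by (intro mult_left_mono) auto
  then show ?thesis using main Ew by linarith
qed


lemma learner_bound:
  assumes i: "i \<in> {1..N}" and aw: "awol (W i) \<gamma> T RW H" and h: "h \<in> H"
    and H_pm1: "\<forall>h\<in>H. \<forall>x. h x \<in> {-1, 1}"
    and gp: "\<gamma> > 0" and ys_pm: "\<And>t. t \<in> {1..T} \<Longrightarrow> ys t \<in> {-1, 1}"
    and A_rng: "\<And>ls. A ls \<in> {-1..1}"
  shows "(\<Sum>t=1..T. (h (xs t) * ys t - 1)) - RW T / \<gamma> \<le>
     (\<Sum>t=1..T. measure_pmf.expectation (FF W A \<gamma> N xs ys (t - 1))
        (\<lambda>S. bpt W A \<gamma> xs ys S t i * (lr_pred (W i) (S i) (xs t) * ys t / \<gamma> - 1)))"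
proof -
  have pred: "\<And>s x. lr_pred (W i) s x \<in> {-1, 1}" using aw unfolding awol_def by blast
  define g where "g t s = lr_pred (W i) s (xs t) * ys t / \<gamma> - 1" for t s
  define Bg where "Bg = 1 + 1 / \<gamma>"
  have gb: "\<bar>g t s\<bar> \<le> Bg" if t: "t \<in> {1..T}" for t s
  proof -
    have "lr_pred (W i) s (xs t) \<in> {-1, 1}" "ys t \<in> {-1, 1}" using pred ys_pm t by blast+
    then have "\<bar>lr_pred (W i) s (xs t) * ys t / \<gamma>\<bar> = 1 / \<gamma>" using gp by (auto simp: abs_mult)
    then show ?thesis unfolding g_def Bg_def by linarith
  qed
  have Eg: "measure_pmf.expectation M (g t) = measure_pmf.expectation M (\<lambda>s. lr_pred (W i) s (xs t)) * (ys t / \<gamma>) - 1" for M t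
  proof -
    have int: "integrable (measure_pmf M) (\<lambda>s. lr_pred (W i) s (xs t))"
    proof (rule pmf_integrable_bnd[where B=1])
      fix s have "lr_pred (W i) s (xs t) \<in> {-1, 1}" by (rule pred)
      then show "\<bar>lr_pred (W i) s (xs t)\<bar> \<le> 1" by auto
    qed
    have "measure_pmf.expectation M (g t) = measure_pmf.expectation M (\<lambda>s. lr_pred (W i) s (xs t) * (ys t / \<gamma>) - 1)"
      unfolding g_def by simp
    also have "\<dots> = measure_pmf.expectation M (\<lambda>s. lr_pred (W i) s (xs t) * (ys t / \<gamma>)) - measure_pmf.expectation M (\<lambda>s. 1)"
      by (rule Bochner_Integration.integral_diff) (use int in auto)
    finally show ?thesis by simp
  qed
  let ?\<Psi> = "\<lambda>x. \<Sum>t=1..T. snd x t * measure_pmf.expectation (LLi (snd x) (t - 1)) (g t)"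
  have "(\<Sum>t=1..T. measure_pmf.expectation (FF W A \<gamma> N xs ys (t - 1))
        (\<lambda>S. bpt W A \<gamma> xs ys S t i * (lr_pred (W i) (S i) (xs t) * ys t / \<gamma> - 1))) =
      (\<Sum>t=1..T. measure_pmf.expectation (HPi T) (\<lambda>x. snd x t * measure_pmf.expectation (LLi (snd x) (t - 1)) (g t)))"
  proof (rule sum.cong[OF refl])
    fix t assume t: "t \<in> {1..T}"
    show "measure_pmf.expectation (FF W A \<gamma> N xs ys (t - 1))
        (\<lambda>S. bpt W A \<gamma> xs ys S t i * (lr_pred (W i) (S i) (xs t) * ys t / \<gamma> - 1)) =
      measure_pmf.expectation (HPi T) (\<lambda>x. snd x t * measure_pmf.expectation (LLi (snd x) (t - 1)) (g t))"
      using exp_transfer[OF i t A_rng, of "g t" Bg] gb[OF t] unfolding g_def by simp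
  qed
  also have "\<dots> = measure_pmf.expectation (HPi T) ?\<Psi>"
  proof (rule Bochner_Integration.integral_sum[symmetric])
    fix t assume t: "t \<in> {1..T}"
    show "integrable (measure_pmf (HPi T)) (\<lambda>x. snd x t * measure_pmf.expectation (LLi (snd x) (t - 1)) (g t))"
    proof (rule pmf_integrable_bnd[where B=Bg])
      fix x assume x: "x \<in> set_pmf (HPi T)"
      have "snd x t \<in> {-1..1}" using x by (intro HP_set[OF A_rng, THEN conjunct2, rule_format])
      then have a: "\<bar>snd x t\<bar> \<le> 1" by auto
      have b: "\<bar>measure_pmf.expectation (LLi (snd x) (t - 1)) (g t)\<bar> \<le> Bg"
        by (rule exp_abs_bound) (rule gb[OF t])
      have "\<bar>snd x t * measure_pmf.expectation (LLi (snd x) (t - 1)) (g t)\<bar> \<le> 1 * Bg"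
        unfolding abs_mult by (rule mult_mono) (use a b in auto)
      then show "\<bar>snd x t * measure_pmf.expectation (LLi (snd x) (t - 1)) (g t)\<bar> \<le> Bg" by simp
    qed
  qed
  also have "\<dots> \<ge> (\<Sum>t=1..T. (h (xs t) * ys t - 1)) - RW T / \<gamma>"
  proof (rule measure_pmf.integral_ge_const)
    show "integrable (measure_pmf (HPi T)) ?\<Psi>"
    proof (rule pmf_integrable_bnd[where B="real T * Bg"])
      fix x assume x: "x \<in> set_pmf (HPi T)"
      have "\<bar>?\<Psi> x\<bar> \<le> (\<Sum>t=1..T. \<bar>snd x t * measure_pmf.expectation (LLi (snd x) (t - 1)) (g t)\<bar>)"
        by (rule sum_abs)
      also have "\<dots> \<le> (\<Sum>t=1..T. Bg)"
      proof (rule sum_mono)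
        fix t assume t: "t \<in> {1..T}"
        have "snd x t \<in> {-1..1}" using x by (intro HP_set[OF A_rng, THEN conjunct2, rule_format])
        then have a: "\<bar>snd x t\<bar> \<le> 1" by auto
        have b: "\<bar>measure_pmf.expectation (LLi (snd x) (t - 1)) (g t)\<bar> \<le> Bg"
          by (rule exp_abs_bound) (rule gb[OF t])
        have "\<bar>snd x t * measure_pmf.expectation (LLi (snd x) (t - 1)) (g t)\<bar> \<le> 1 * Bg"
          unfolding abs_mult by (rule mult_mono) (use a b in auto)
        then show "\<bar>snd x t * measure_pmf.expectation (LLi (snd x) (t - 1)) (g t)\<bar> \<le> Bg" by simp
      qed
      finally show "\<bar>?\<Psi> x\<bar> \<le> real T * Bg" by simp
    qed
    show "AE x in measure_pmf (HPi T). (\<Sum>t=1..T. (h (xs t) * ys t - 1)) - RW T / \<gamma> \<le> ?\<Psi> x"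
    proof (rule AE_pmfI)
      fix x assume x: "x \<in> set_pmf (HPi T)"
      define \<pi> where "\<pi> = snd x"
      have \<pi>r: "\<And>t. \<pi> t \<in> {-1..1}" unfolding \<pi>_def using x by (intro HP_set[OF A_rng, THEN conjunct2, rule_format])
      define E where "E t = measure_pmf.expectation (LLi \<pi> (t - 1)) (\<lambda>s. lr_pred (W i) s (xs t))" for t
      have aw1: "\<gamma> * (\<Sum>t=1..T. h (xs t) * \<pi> t * ys t) - RW T \<le> (\<Sum>t=1..T. E t * \<pi> t * ys t)"
        unfolding E_def by (rule awol_pi[OF aw h H_pm1 gp ys_pm \<pi>r])
      have "?\<Psi> x = (\<Sum>t=1..T. \<pi> t * (E t * (ys t / \<gamma>) - 1))"
        by (simp add: \<pi>_def E_def Eg)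
      also have "\<dots> = (1 / \<gamma>) * (\<Sum>t=1..T. E t * \<pi> t * ys t) - (\<Sum>t=1..T. \<pi> t)"
        by (simp add: sum_distrib_left sum_subtractf algebra_simps)
      also have "\<dots> \<ge> (1 / \<gamma>) * (\<gamma> * (\<Sum>t=1..T. h (xs t) * \<pi> t * ys t) - RW T) - (\<Sum>t=1..T. \<pi> t)"
        using aw1 gp by (intro diff_right_mono mult_left_mono) auto
      finally have s1: "?\<Psi> x \<ge> (\<Sum>t=1..T. \<pi> t * (h (xs t) * ys t - 1)) - RW T / \<gamma>"
        using gp by (simp add: sum_distrib_left sum_subtractf algebra_simps)
      have "(\<Sum>t=1..T. (h (xs t) * ys t - 1)) \<le> (\<Sum>t=1..T. \<pi> t * (h (xs t) * ys t - 1))"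
      proof (rule sum_mono)
        fix t assume t: "t \<in> {1..T}"
        have "h (xs t) \<in> {-1, 1}" "ys t \<in> {-1, 1}" using H_pm1 h ys_pm t by blast+
        then have "h (xs t) * ys t - 1 \<le> 0" by auto
        moreover have "\<pi> t \<le> 1" using \<pi>r[of t] by auto
        ultimately show "h (xs t) * ys t - 1 \<le> \<pi> t * (h (xs t) * ys t - 1)"
        proof -
          assume a: "h (xs t) * ys t - 1 \<le> 0" "\<pi> t \<le> 1"
          have "(1 - \<pi> t) * (h (xs t) * ys t - 1) \<le> 0" by (rule mult_nonneg_nonpos) (use a in auto)
          then show ?thesis by (simp add: algebra_simps)
        qed
      qed
      with s1 show "(\<Sum>t=1..T. (h (xs t) * ys t - 1)) - RW T / \<gamma> \<le> ?\<Psi> x" by linarith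
    qed
  qed
  finally show ?thesis .
qed

end



theorem proposition3:
  fixes H :: "('x \<Rightarrow> real) set"
    and W :: "nat \<Rightarrow> ('s, 'x) learner"
    and A :: "(real \<Rightarrow> real) list \<Rightarrow> real"
    and RW RA :: "nat \<Rightarrow> real"
    and T N :: nat and \<gamma> B :: real
    and xs :: "nat \<Rightarrow> 'x" and ys :: "nat \<Rightarrow> real"
  assumes H_pm1: "\<forall>h\<in>H. \<forall>x. h x \<in> {-1, 1}"
    and H_ne: "H \<noteq> {}"
    and T_pos: "T > 0" and N_pos: "N > 0"
    and gamma_pos: "\<gamma> > 0"
    and weak: "\<forall>i\<in>{1..N}. awol (W i) \<gamma> T RW H"
    and A_oco: "oco A N (RA N) B"
    and B_ge: "B \<ge> 1 + 1 / \<gamma>"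
    and A_init: "A [] = 0"
    and ys_pm1: "\<forall>t\<in>{1..T}. ys t \<in> {-1, 1}"
  shows "(1 / real T) *
           measure_pmf.expectation (boost_run W A \<gamma> N xs ys T)
             (\<lambda>(S, acc). (SUP h\<in>H. \<Sum>t=1..T. h (xs t) * ys t) - acc)
         \<le> RW T / (\<gamma> * real T) + RA N / real N"
proof -
  have ys_pm: "\<And>t. t \<in> {1..T} \<Longrightarrow> ys t \<in> {-1, 1}" using ys_pm1 by blast
  have A_rng: "\<And>ls. A ls \<in> {-1..1}" using A_oco unfolding oco_def by blast
  have pred: "\<And>k s x. k \<in> {1..N} \<Longrightarrow> lr_pred (W k) s x \<in> {-1, 1}" using weak unfolding awol_def by blast
  let ?run = "boost_run W A \<gamma> N xs ys T"
  let ?F = "FF W A \<gamma> N xs ys"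
  define G where "G t j S = bpt W A \<gamma> xs ys S t j * (lr_pred (W j) (S j) (xs t) * ys t / \<gamma> - 1)" for t j S
  define m where "m t S = measure_pmf.expectation (proj_pmf (zz W \<gamma> N xs S t)) (\<lambda>v. v) * ys t" for t S
  have Gb: "\<bar>G t j S\<bar> \<le> 1 + 1 / \<gamma>" if t: "t \<in> {1..T}" and j: "j \<in> {1..N}" for t j S
  proof -
    have "lr_pred (W j) (S j) (xs t) \<in> {-1, 1}" "ys t \<in> {-1, 1}" using pred[OF j] ys_pm[OF t] by blast+
    then have "\<bar>lr_pred (W j) (S j) (xs t) * ys t / \<gamma>\<bar> = 1 / \<gamma>" using gamma_pos by (auto simp: abs_mult)
    then have a: "\<bar>lr_pred (W j) (S j) (xs t) * ys t / \<gamma> - 1\<bar> \<le> 1 + 1 / \<gamma>" by linarith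
    have b: "\<bar>bpt W A \<gamma> xs ys S t j\<bar> \<le> 1" using bp_range[OF A_rng] unfolding bpt_def by (simp add: abs_le_iff)
    have "\<bar>G t j S\<bar> \<le> 1 * (1 + 1 / \<gamma>)" unfolding G_def abs_mult by (rule mult_mono) (use a b in auto)
    then show ?thesis by simp
  qed
  have mb: "\<bar>m t S\<bar> \<le> 1" if t: "t \<in> {1..T}" for t S
  proof -
    have "\<bar>measure_pmf.expectation (proj_pmf (zz W \<gamma> N xs S t)) (\<lambda>v. v)\<bar> \<le> 1"
      unfolding proj_mean by (auto simp: sgn_if)
    moreover have "\<bar>ys t\<bar> = 1" using ys_pm[OF t] by auto
    ultimately show ?thesis unfolding m_def by (simp add: abs_mult)
  qed
  have round: "measure_pmf.expectation (?F (t - 1)) (m t) \<ge>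
       1 - RA N / N + (1 / N) * (\<Sum>j=1..N. measure_pmf.expectation (?F (t - 1)) (G t j))"
    if t: "t \<in> {1..T}" for t
  proof -
    have intG: "integrable (measure_pmf (?F (t - 1))) (G t j)" if j: "j \<in> {1..N}" for j
      by (rule pmf_integrable_bnd[where B="1 + 1 / \<gamma>"]) (rule Gb[OF t j])
    have "measure_pmf.expectation (?F (t - 1)) (\<lambda>S. 1 - RA N / N + (1 / N) * (\<Sum>j=1..N. G t j S))
        \<le> measure_pmf.expectation (?F (t - 1)) (m t)"
    proof (rule integral_mono)
      show "integrable (measure_pmf (?F (t - 1))) (m t)"
        by (rule pmf_integrable_bnd[where B=1]) (rule mb[OF t])
      show "integrable (measure_pmf (?F (t - 1))) (\<lambda>S. 1 - RA N / N + (1 / N) * (\<Sum>j=1..N. G t j S))"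
        by (intro Bochner_Integration.integrable_add Bochner_Integration.integrable_mult_right
            Bochner_Integration.integrable_sum intG measure_pmf.integrable_const) auto
      fix S
      have w: "\<forall>j\<in>{1..N}. lr_pred (W j) (S j) (xs t) \<in> {-1, 1}" using pred by blast
      show "1 - RA N / N + (1 / N) * (\<Sum>j=1..N. G t j S) \<le> m t S"
        using round_ineq[OF w ys_pm[OF t] A_oco B_ge A_init N_pos gamma_pos]
        unfolding m_def G_def zz_def bpt_def by simp
    qed
    also have "measure_pmf.expectation (?F (t - 1)) (\<lambda>S. 1 - RA N / N + (1 / N) * (\<Sum>j=1..N. G t j S))
        = 1 - RA N / N + (1 / N) * (\<Sum>j=1..N. measure_pmf.expectation (?F (t - 1)) (G t j))"
    proof -
      let ?M = "measure_pmf (?F (t - 1))"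
      have iS: "integrable ?M (\<lambda>S. \<Sum>j=1..N. G t j S)"
        by (intro Bochner_Integration.integrable_sum intG) auto
      have "measure_pmf.expectation (?F (t - 1)) (\<lambda>S. 1 - RA N / N + (1 / N) * (\<Sum>j=1..N. G t j S))
          = measure_pmf.expectation (?F (t - 1)) (\<lambda>S. 1 - RA N / N) + measure_pmf.expectation (?F (t - 1)) (\<lambda>S. (1 / N) * (\<Sum>j=1..N. G t j S))"
        by (rule Bochner_Integration.integral_add[OF _ Bochner_Integration.integrable_mult_right[OF iS]]) simp
      also have "measure_pmf.expectation (?F (t - 1)) (\<lambda>S. (1 / N) * (\<Sum>j=1..N. G t j S)) = (1 / N) * measure_pmf.expectation (?F (t - 1)) (\<lambda>S. \<Sum>j=1..N. G t j S)"
        by (rule integral_mult_right_zero)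
      also have "measure_pmf.expectation (?F (t - 1)) (\<lambda>S. \<Sum>j=1..N. G t j S) = (\<Sum>j=1..N. measure_pmf.expectation (?F (t - 1)) (G t j))"
        by (rule Bochner_Integration.integral_sum) (rule intG, auto)
      finally show ?thesis by simp
    qed
    finally show ?thesis .
  qed
  have key: "(\<Sum>t=1..T. h (xs t) * ys t) - measure_pmf.expectation ?run snd \<le> T * (RA N / N) + RW T / \<gamma>"
    if h: "h \<in> H" for h
  proof -
    have lb: "(\<Sum>t=1..T. (h (xs t) * ys t - 1)) - RW T / \<gamma> \<le> (\<Sum>t=1..T. measure_pmf.expectation (?F (t - 1)) (G t j))"
      if j: "j \<in> {1..N}" for j
      unfolding G_def
      by (rule learner_bound[OF j]) (use weak j h H_pm1 gamma_pos ys_pm A_rng in auto)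
    have "measure_pmf.expectation ?run snd = (\<Sum>t=1..T. measure_pmf.expectation (?F (t - 1)) (m t))"
      unfolding acc_sum m_def ..
    also have "\<dots> \<ge> (\<Sum>t=1..T. 1 - RA N / N + (1 / N) * (\<Sum>j=1..N. measure_pmf.expectation (?F (t - 1)) (G t j)))"
      by (rule sum_mono) (rule round)
    finally have s0: "measure_pmf.expectation ?run snd \<ge> T * (1 - RA N / N) + (1 / N) * (\<Sum>t=1..T. \<Sum>j=1..N. measure_pmf.expectation (?F (t - 1)) (G t j))"
      by (simp add: sum.distrib sum_distrib_left)
    have sw: "(\<Sum>t=1..T. \<Sum>j=1..N. measure_pmf.expectation (?F (t - 1)) (G t j)) = (\<Sum>j=1..N. \<Sum>t=1..T. measure_pmf.expectation (?F (t - 1)) (G t j))"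
      by (rule sum.swap)
    have s1: "measure_pmf.expectation ?run snd \<ge> T * (1 - RA N / N) + (1 / N) * (\<Sum>j=1..N. \<Sum>t=1..T. measure_pmf.expectation (?F (t - 1)) (G t j))"
      using s0 unfolding sw .
    have "(\<Sum>j=1..N. \<Sum>t=1..T. measure_pmf.expectation (?F (t - 1)) (G t j)) \<ge> (\<Sum>j=1..N. (\<Sum>t=1..T. (h (xs t) * ys t - 1)) - RW T / \<gamma>)"
      by (rule sum_mono) (rule lb)
    then have "(1 / N) * (\<Sum>j=1..N. \<Sum>t=1..T. measure_pmf.expectation (?F (t - 1)) (G t j)) \<ge> (\<Sum>t=1..T. (h (xs t) * ys t - 1)) - RW T / \<gamma>"
      using N_pos by (simp add: field_simps)
    with s1 have "measure_pmf.expectation ?run snd \<ge> T * (1 - RA N / N) + (\<Sum>t=1..T. (h (xs t) * ys t - 1)) - RW T / \<gamma>"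
      by linarith
    moreover have "(\<Sum>t=1..T. (h (xs t) * ys t - 1)) = (\<Sum>t=1..T. h (xs t) * ys t) - T"
      by (simp add: sum_subtractf)
    ultimately show ?thesis by (simp add: algebra_simps)
  qed
  define SUPv where "SUPv = (SUP h\<in>H. \<Sum>t=1..T. h (xs t) * ys t)"
  have sup_le: "SUPv - measure_pmf.expectation ?run snd \<le> T * (RA N / N) + RW T / \<gamma>"
  proof -
    have "SUPv \<le> T * (RA N / N) + RW T / \<gamma> + measure_pmf.expectation ?run snd"
      unfolding SUPv_def using key H_ne by (intro cSUP_least) (auto simp: algebra_simps)
    then show ?thesis by simp
  qed
  have "measure_pmf.expectation ?run (\<lambda>(S, acc). SUPv - acc) = SUPv - measure_pmf.expectation ?run snd"
  proof -
    have "integrable (measure_pmf ?run) snd"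
      by (rule pmf_integrable_bnd[where B="\<Sum>t=1..T. \<bar>ys t\<bar>"]) (rule acc_bound)
    then show ?thesis by (simp add: case_prod_unfold)
  qed
  then have "measure_pmf.expectation ?run (\<lambda>(S, acc). SUPv - acc) \<le> T * (RA N / N) + RW T / \<gamma>"
    using sup_le by simp
  then have "(1 / real T) * measure_pmf.expectation ?run (\<lambda>(S, acc). SUPv - acc) \<le> (1 / real T) * (T * (RA N / N) + RW T / \<gamma>)"
    using T_pos by (intro mult_left_mono) auto
  also have "\<dots> = RW T / (\<gamma> * real T) + RA N / real N"
    using T_pos gamma_pos by (simp add: field_simps)
  finally show ?thesis unfolding SUPv_def .
qed


end
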